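(* Let $\mathbf{k}$ be a reproducing kernel with RKHS $\mathcal{H}_{\mathbf{k}}$, let $\mathcal{X}_{\mathrm{in}}$ be a finite input set and $\mathcal{X}_{\mathrm{out}}\subseteq\mathcal{X}_{\mathrm{in}}$ a random output, let $\mathcal{F}\subset\mathcal{H}_{\mathbf{k}}$, $\varepsilon\ge0$, and $\delta'\in(0,1)$. Let $a:=\sup_{f\in\mathcal{F}}\|f\|_{\mathbf{k}}$, $\mathbb{B}_{\mathcal{F}}:=\{f\in\mathcal{H}_{\mathbf{k}}:\|f\|_{\mathbf{k}}\le a\}$, and let $\mathcal{C}_{\varepsilon,\mathcal{F}}$ be a set of minimum cardinality satisfying $\mathcal{C}_{\varepsilon,\mathcal{F}}\subset\mathbb{B}_{\mathcal{F}}$ and $\sup_{f\in\mathcal{F}}\min_{f'\in\mathcal{C}_{\varepsilon,\mathcal{F}}}\max_{x\in\mathcal{X}_{\mathrm{in}}}|f(x)-f'(x)|\le\varepsilon$. If $(\mathbb{P}_{\mathrm{in}}-\mathbb{P}_{\mathrm{out}})\mathbf{k}$ is $(\mathbf{k},\nu)$-sub-Gaussian on an event $\mathcal{E}$, then $$\mathbb{P}\Big(\mathcal{E}\cap\Big\{\sup_{f\in\mathcal{F}}(\mathbb{P}_{\mathrm{in}}-\mathbb{P}_{\mathrm{out}})f>2\varepsilon+\nu a\sqrt{2\log(|\mathcal{C}_{\varepsilon,\mathcal{F}}|/\delta')}\Big\}\Big)\le\delta',$$ i.e. on $\mathcal{E}$, $\sup_{f\in\mathcal{F}}(\mathbb{P}_{\mathrm{in}}-\mathbb{P}_{\mathrm{out}})f\le2\varepsilon+\nu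 a\sqrt{2\log(|\mathcal{C}_{\varepsilon,\mathcal{F}}|/\delta')}$ with probability at least $1-\delta'$.
   Context: $\mathbb{P}_{\mathrm{in}},\mathbb{P}_{\mathrm{out}}$ are the empirical distributions of $\mathcal{X}_{\mathrm{in}},\mathcal{X}_{\mathrm{out}}$; $(\mathbb{P}_{\mathrm{in}}-\mathbb{P}_{\mathrm{out}})f:=\mathbb{E}_{\mathbb{P}_{\mathrm{in}}}f-\mathbb{E}_{\mathbb{P}_{\mathrm{out}}}f$ and $(\mathbb{P}_{\mathrm{in}}-\mathbb{P}_{\mathrm{out}})\mathbf{k}:=\frac{1}{|\mathcal{X}_{\mathrm{in}}|}\sum_{x\in\mathcal{X}_{\mathrm{in}}}\mathbf{k}(x,\cdot)-\frac1{|\mathcal{X}_{\mathrm{out}}|}\sum_{x\in\mathcal{X}_{\mathrm{out}}}\mathbf{k}(x,\cdot)$. A random $\phi\in\mathcal{H}_{\mathbf{k}}$ is $(\mathbf{k},\nu)$-sub-Gaussian on $\mathcal{E}$ if $\nu>0$ and $\mathbb{E}[\exp(\langle f,\phi\rangle_{\mathbf{k}})\mathbf{1}_{\mathcal{E}}]\le\exp(\frac{\nu^2}{2}\|f\|_{\mathbf{k}}^2)$ for all $f\in\mathcal{H}_{\mathbf{k}}$. *)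

theory Defs
  imports "HOL-Analysis.Analysis" "HOL-Probability.Probability"
begin

text \<open>RKHS model: the RKHS H_k is a real Hilbert space (type 'h) together with
  the canonical feature map Phi x = k(x, .) in H_k.  An element f of H_k is the function
  x |-> f(x) = <f, Phi x> (reproducing property); the kernel is k x y = <Phi x, Phi y>.
  The condition below says that distinct elements of 'h are distinct functions,
  i.e. 'h really is (isometric to) a Hilbert space of functions with reproducing kernel k.\<close>

definition rkhs_feature :: "('a \<Rightarrow> 'h::{real_inner,complete_space}) \<Rightarrow> bool" where
  "rkhs_feature Phi \<longleftrightarrow> inj (\<lambda>f::'h. \<lambda>x. inner f (Phi x))"

definition kernel_of :: "('a \<Rightarrow> 'h::real_inner) \<Rightarrow> 'a \<Rightarrow> 'a \<Rightarrow> real" where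
  "kernel_of Phi x y = inner (Phi x) (Phi y)"

definition rk_eval :: "('a \<Rightarrow> 'h::real_inner) \<Rightarrow> 'h \<Rightarrow> 'a \<Rightarrow> real" where
  "rk_eval Phi f x = inner f (Phi x)"

definition emp_diff_fun :: "('a \<Rightarrow> 'h::real_inner) \<Rightarrow> 'a set \<Rightarrow> 'a set \<Rightarrow> 'h \<Rightarrow> real" where
  "emp_diff_fun Phi Xin Xout f =
     (\<Sum>x\<in>Xin. rk_eval Phi f x) / real (card Xin) - (\<Sum>x\<in>Xout. rk_eval Phi f x) / real (card Xout)"

definition emp_diff_kernel :: "('a \<Rightarrow> 'h::real_inner) \<Rightarrow> 'a set \<Rightarrow> 'a set \<Rightarrow> 'h" where
  "emp_diff_kernel Phi Xin Xout =
     (1 / real (card Xin)) *\<^sub>R (\<Sum>x\<in>Xin. Phi x) - (1 / real (card Xout)) *\<^sub>R (\<Sum>x\<in>Xout. Phi x)"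

definition subgaussian_on ::
  "'w measure \<Rightarrow> 'w set \<Rightarrow> real \<Rightarrow> ('w \<Rightarrow> 'h::real_inner) \<Rightarrow> bool" where
  "subgaussian_on M E nu phi \<longleftrightarrow> nu > 0 \<and>
     (\<forall>f::'h. (\<integral>\<^sup>+ \<omega>. ennreal (exp (inner f (phi \<omega>)) * indicator E \<omega>) \<partial>M)
                 \<le> ennreal (exp (nu\<^sup>2 / 2 * (norm f)\<^sup>2)))"

definition is_cover :: "('a \<Rightarrow> 'h::real_inner) \<Rightarrow> 'a set \<Rightarrow> 'h set \<Rightarrow> real \<Rightarrow> real \<Rightarrow> 'h set \<Rightarrow> bool" where
  "is_cover Phi Xin F a eps C \<longleftrightarrow>
     C \<subseteq> {g. norm g \<le> a} \<and>
     (\<forall>f\<in>F. \<exists>f'\<in>C. \<forall>x\<in>Xin. \<bar>rk_eval Phi f x - rk_eval Phi f' x\<bar> \<le> eps)"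

end

theory Submission
  imports Defs
begin

lemma avg_bound:
  fixes g h :: "'a \<Rightarrow> real"
  assumes "finite S" "S \<noteq> {}" "\<And>x. x \<in> S \<Longrightarrow> \<bar>g x - h x\<bar> \<le> e"
  shows "\<bar>sum g S / real (card S) - sum h S / real (card S)\<bar> \<le> e"
proof -
  have cpos: "real (card S) > 0" using assms card_gt_0_iff by auto
  have "\<bar>sum g S - sum h S\<bar> = \<bar>\<Sum>x\<in>S. g x - h x\<bar>" by (simp add: sum_subtractf)
  also have "\<dots> \<le> (\<Sum>x\<in>S. \<bar>g x - h x\<bar>)" by (rule sum_abs)
  also have "\<dots> \<le> (\<Sum>x\<in>S. e)" using assms(3) by (intro sum_mono) auto
  also have "\<dots> = real (card S) * e" by simp
  finally have "\<bar>sum g S - sum h S\<bar> \<le> real (card S) * e" .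
  moreover have "sum g S / real (card S) - sum h S / real (card S) = (sum g S - sum h S) / real (card S)"
    by (simp add: diff_divide_distrib)
  moreover have "\<bar>(sum g S - sum h S) / real (card S)\<bar> = \<bar>sum g S - sum h S\<bar> / real (card S)"
    using cpos by (simp add: abs_divide)
  moreover have "\<bar>sum g S - sum h S\<bar> / real (card S) \<le> real (card S) * e / real (card S)"
    using cpos \<open>\<bar>sum g S - sum h S\<bar> \<le> real (card S) * e\<close> by (intro divide_right_mono) auto
  moreover have "real (card S) * e / real (card S) = e" using cpos by simp
  ultimately show ?thesis by simp
qed

lemma emp_inner:
  "emp_diff_fun Phi Xin Xo f = inner f (emp_diff_kernel Phi Xin Xo)"
  unfolding emp_diff_fun_def emp_diff_kernel_def rk_eval_def
  by (simp add: inner_diff_right inner_sum_right)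

theorem lemmaC3:
  fixes M :: "'w measure"
    and Phi :: "'a \<Rightarrow> 'h::{real_inner,complete_space}"
    and Xin :: "'a set" and Xout :: "'w \<Rightarrow> 'a set"
    and F :: "'h set" and C :: "'h set"
    and E :: "'w set" and eps nu delta a :: real
  assumes "prob_space M"
    and "rkhs_feature Phi"
    and "finite Xin" and "Xin \<noteq> {}"
    and "\<And>\<omega>. \<omega> \<in> space M \<Longrightarrow> Xout \<omega> \<subseteq> Xin \<and> Xout \<omega> \<noteq> {}"
    and "\<And>S. {\<omega> \<in> space M. Xout \<omega> = S} \<in> sets M"
    and "F \<noteq> {}" and "bdd_above (norm ` F)"
    and "eps \<ge> 0" and "0 < delta" and "delta < 1"
    and "a = (SUP f\<in>F. norm f)"
    and "finite C" and "is_cover Phi Xin F a eps C"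
    and "\<And>C'. finite C' \<Longrightarrow> is_cover Phi Xin F a eps C' \<Longrightarrow> card C \<le> card C'"
    and "E \<in> sets M"
    and "subgaussian_on M E nu (\<lambda>\<omega>. emp_diff_kernel Phi Xin (Xout \<omega>))"
  shows "measure M {\<omega> \<in> space M. \<omega> \<in> E \<and>
            (SUP f\<in>F. emp_diff_fun Phi Xin (Xout \<omega>) f)
              > 2 * eps + nu * a * sqrt (2 * ln (real (card C) / delta))} \<le> delta"
proof -
  interpret P: prob_space M by fact
  define phi where "phi = (\<lambda>\<omega>. emp_diff_kernel Phi Xin (Xout \<omega>))"
  define L where "L = ln (real (card C) / delta)"
  define t where "t = nu * a * sqrt (2 * L)"
  have nu: "nu > 0" and sg: "\<And>f. (\<integral>\<^sup>+ \<omega>. ennreal (exp (inner f (phi \<omega>)) * indicator E \<omega>) \<partial>M)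
                 \<le> ennreal (exp (nu\<^sup>2 / 2 * (norm f)\<^sup>2))"
    using assms(17) unfolding subgaussian_on_def phi_def by auto
  have Csub: "C \<subseteq> {g. norm g \<le> a}" and cov: "\<And>f. f \<in> F \<Longrightarrow> \<exists>f'\<in>C. \<forall>x\<in>Xin. \<bar>rk_eval Phi f x - rk_eval Phi f' x\<bar> \<le> eps"
    using assms(14) unfolding is_cover_def by auto
  obtain f0 where f0: "f0 \<in> F" using assms(7) by auto
  have a0: "a \<ge> 0"
  proof -
    have "norm f0 \<le> a" unfolding assms(12) using f0 assms(8) by (intro cSUP_upper) auto
    thus ?thesis using norm_ge_zero order_trans by blast
  qed
  have normF: "\<And>f. f \<in> F \<Longrightarrow> norm f \<le> a" unfolding assms(12) using assms(8) by (intro cSUP_upper) auto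
  have Cne: "C \<noteq> {}" using cov[OF f0] by auto
  have "card C \<ge> 1" using Cne assms(13) by (simp add: card_gt_0_iff Suc_le_eq)
  then have cardpos: "real (card C) \<ge> 1" by simp
  have "real (card C) / delta > 1" using cardpos assms(10,11) by (simp add: less_divide_eq)
  then have Lpos: "L > 0" unfolding L_def by simp
  have meas: "\<And>Q. {\<omega> \<in> space M. Q (Xout \<omega>)} \<in> sets M"
  proof -
    fix Q
    have "{\<omega> \<in> space M. Q (Xout \<omega>)} = (\<Union>S\<in>{S. S \<subseteq> Xin \<and> Q S}. {\<omega> \<in> space M. Xout \<omega> = S})"
      using assms(5) by auto
    also have "\<dots> \<in> sets M" using assms(3,6) by (intro sets.finite_UN) auto
    finally show "{\<omega> \<in> space M. Q (Xout \<omega>)} \<in> sets M" .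
  qed
  define A where "A = (\<lambda>c. {\<omega> \<in> space M. \<omega> \<in> E \<and> inner c (phi \<omega>) > t})"
  have Ameas: "\<And>c. A c \<in> sets M"
  proof -
    fix c
    have "A c = E \<inter> {\<omega> \<in> space M. inner c (emp_diff_kernel Phi Xin (Xout \<omega>)) > t}"
      unfolding A_def phi_def by auto
    thus "A c \<in> sets M" using meas assms(16) by auto
  qed
  have Abound: "measure M (A c) \<le> delta / real (card C)" if c: "c \<in> C" for c
  proof (cases "a = 0")
    case True
    then have "c = 0" using Csub c by auto
    then have "A c = {}" unfolding A_def t_def using True by auto
    then show ?thesis using assms(10) by simp
  next
    case False
    then have apos: "a > 0" using a0 by auto
    define lam where "lam = sqrt (2 * L) / (nu * a)"
    have lampos: "lam > 0" unfolding lam_def using Lpos nu apos by auto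
    have "lam * t = sqrt (2 * L) * sqrt (2 * L)" unfolding lam_def t_def using nu apos by simp
    also have "\<dots> = 2 * L" using Lpos by simp
    finally have lt: "lam * t = 2 * L" .
    have nc: "norm c \<le> a" using Csub c by auto
    have "ennreal (exp (lam * t)) * emeasure M (A c) = (\<integral>\<^sup>+ \<omega>. ennreal (exp (lam * t)) * indicator (A c) \<omega> \<partial>M)"
      using Ameas by (simp add: nn_integral_cmult_indicator)
    also have "\<dots> \<le> (\<integral>\<^sup>+ \<omega>. ennreal (exp (inner (lam *\<^sub>R c) (phi \<omega>)) * indicator E \<omega>) \<partial>M)"
    proof (intro nn_integral_mono)
      fix x assume "x \<in> space M"
      show "ennreal (exp (lam * t)) * indicator (A c) x \<le> ennreal (exp (inner (lam *\<^sub>R c) (phi x)) * indicator E x)"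
      proof (cases "x \<in> A c")
        case True
        then have "x \<in> E" "inner c (phi x) > t" unfolding A_def by auto
        then have "exp (lam * t) \<le> exp (inner (lam *\<^sub>R c) (phi x))" using lampos by simp
        then show ?thesis using \<open>x \<in> E\<close> True by simp
      qed simp
    qed
    also have "\<dots> \<le> ennreal (exp (nu\<^sup>2 / 2 * (norm (lam *\<^sub>R c))\<^sup>2))" by (rule sg)
    finally have "ennreal (exp (lam * t) * measure M (A c)) \<le> ennreal (exp (nu\<^sup>2 / 2 * (norm (lam *\<^sub>R c))\<^sup>2))"
      by (simp add: P.emeasure_eq_measure ennreal_mult'')
    then have m1: "exp (lam * t) * measure M (A c) \<le> exp (nu\<^sup>2 / 2 * (norm (lam *\<^sub>R c))\<^sup>2)"
      by (simp add: ennreal_le_iff)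
    have "nu\<^sup>2 / 2 * (norm (lam *\<^sub>R c))\<^sup>2 \<le> nu\<^sup>2 / 2 * (lam * a)\<^sup>2"
      using nc lampos by (intro mult_left_mono power_mono) auto
    also have "\<dots> = L"
    proof -
      have "lam * a = sqrt (2 * L) / nu" unfolding lam_def using nu apos by simp
      then have "(lam * a)\<^sup>2 = 2 * L / nu\<^sup>2" using Lpos by (simp add: power_divide)
      then show ?thesis using nu by simp
    qed
    finally have "exp (lam * t) * measure M (A c) \<le> exp L" using m1 by (meson exp_le_cancel_iff order_trans)
    then have "measure M (A c) \<le> exp L / exp (2 * L)" using lt by (simp add: field_simps)
    also have "exp L / exp (2 * L) = exp (- L)" by (simp add: exp_diff[symmetric])
    also have "\<dots> = delta / real (card C)" unfolding L_def using cardpos assms(10)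
      by (simp add: exp_minus)
    finally show ?thesis .
  qed
  have sub: "{\<omega> \<in> space M. \<omega> \<in> E \<and>
            (SUP f\<in>F. emp_diff_fun Phi Xin (Xout \<omega>) f)
              > 2 * eps + nu * a * sqrt (2 * ln (real (card C) / delta))} \<subseteq> (\<Union>c\<in>C. A c)"
  proof
    fix w assume w: "w \<in> {\<omega> \<in> space M. \<omega> \<in> E \<and>
            (SUP f\<in>F. emp_diff_fun Phi Xin (Xout \<omega>) f)
              > 2 * eps + nu * a * sqrt (2 * ln (real (card C) / delta))}"
    have bdd: "bdd_above ((\<lambda>f. emp_diff_fun Phi Xin (Xout w) f) ` F)"
    proof (rule bdd_aboveI2)
      fix f assume "f \<in> F"
      have "emp_diff_fun Phi Xin (Xout w) f \<le> norm f * norm (phi w)"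
        unfolding emp_inner phi_def by (metis Cauchy_Schwarz_ineq2 abs_le_D1)
      also have "\<dots> \<le> a * norm (phi w)" using normF[OF \<open>f \<in> F\<close>] by (intro mult_right_mono) auto
      finally show "emp_diff_fun Phi Xin (Xout w) f \<le> a * norm (phi w)" .
    qed
    obtain f where f: "f \<in> F" "emp_diff_fun Phi Xin (Xout w) f > 2 * eps + t"
      using w less_cSUP_iff[OF assms(7) bdd] unfolding t_def L_def by auto
    obtain c where c: "c \<in> C" "\<forall>x\<in>Xin. \<bar>rk_eval Phi f x - rk_eval Phi c x\<bar> \<le> eps" using cov[OF f(1)] by auto
    have xo: "Xout w \<subseteq> Xin" "Xout w \<noteq> {}" using assms(5) w by auto
    have fin: "finite (Xout w)" using xo assms(3) finite_subset by auto
    have b1: "\<bar>sum (rk_eval Phi f) Xin / real (card Xin) - sum (rk_eval Phi c) Xin / real (card Xin)\<bar> \<le> eps"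
      using c(2) assms(3,4) by (intro avg_bound) auto
    have b2: "\<bar>sum (rk_eval Phi f) (Xout w) / real (card (Xout w)) - sum (rk_eval Phi c) (Xout w) / real (card (Xout w))\<bar> \<le> eps"
      using c(2) xo fin by (intro avg_bound) auto
    have "emp_diff_fun Phi Xin (Xout w) f \<le> 2 * eps + emp_diff_fun Phi Xin (Xout w) c"
      using b1 b2 unfolding emp_diff_fun_def by (simp add: abs_le_iff)
    then have "inner c (phi w) > t" using f(2) unfolding emp_inner phi_def by simp
    then show "w \<in> (\<Union>c\<in>C. A c)" using c(1) w unfolding A_def by auto
  qed
  have "measure M {\<omega> \<in> space M. \<omega> \<in> E \<and>
            (SUP f\<in>F. emp_diff_fun Phi Xin (Xout \<omega>) f)
              > 2 * eps + nu * a * sqrt (2 * ln (real (card C) / delta))} \<le> measure M (\<Union>c\<in>C. A c)"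
    using sub Ameas assms(13) by (intro P.finite_measure_mono) auto
  also have "\<dots> \<le> (\<Sum>c\<in>C. measure M (A c))"
    using Ameas assms(13) by (intro P.finite_measure_subadditive_finite) auto
  also have "\<dots> \<le> (\<Sum>c\<in>C. delta / real (card C))" using Abound by (intro sum_mono) auto
  also have "\<dots> = delta" using cardpos by simp
  finally show ?thesis .
qed

end
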